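(* Let $p_\theta(\tau)$ be a family of distributions over trajectories $\tau$, differentiable in the parameter $\theta$, with real reward $R(\tau)$. Let $S=S(\tau;\theta)$ be a discrete stratum assignment (which may depend on $\theta$), $p_k(\theta)=\Pr_\theta(S=k)$, $\mu_k(\theta)=\mathbb E_\theta[R\mid S=k]$, and $\sigma_k(\theta)>0$ the stratum-wise standard deviation of $R$ given $S=k$. Let $\varepsilon>0$ and define \[A_{\mathrm{SAN}}(\tau)=\frac{R(\tau)-\mu_S(\theta)}{\sigma_S(\theta)+\varepsilon}.\] Then, under standard regularity conditions allowing differentiation under the expectation, \[\mathbb E_\theta\big[A_{\mathrm{SAN}}(\tau)\nabla_\theta\log p_\theta(\tau)\big]=\sum_k\frac{p_k(\theta)}{\sigma_k(\theta)+\varepsilon}\nabla_\theta\mu_k(\theta).\] *)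

theory Defs
  imports "HOL-Analysis.Analysis"
begin

definition grad :: "('a::euclidean_space \<Rightarrow> real) \<Rightarrow> 'a \<Rightarrow> 'a" where
  "grad f x = (THE g. (f has_derivative (\<lambda>h. g \<bullet> h)) (at x))"

definition expect :: "'t measure \<Rightarrow> ('a \<Rightarrow> 't \<Rightarrow> real) \<Rightarrow> 'a \<Rightarrow> ('t \<Rightarrow> 'b::{banach,second_countable_topology}) \<Rightarrow> 'b" where
  "expect M p \<theta> f = (\<integral>\<tau>. p \<theta> \<tau> *\<^sub>R f \<tau> \<partial>M)"

definition strat_prob :: "'t measure \<Rightarrow> ('a \<Rightarrow> 't \<Rightarrow> real) \<Rightarrow> ('a \<Rightarrow> 't \<Rightarrow> 'k) \<Rightarrow> 'a \<Rightarrow> 'k \<Rightarrow> real" where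
  "strat_prob M p S \<theta> k = expect M p \<theta> (\<lambda>\<tau>. if S \<theta> \<tau> = k then 1 else 0)"

definition strat_mean :: "'t measure \<Rightarrow> ('a \<Rightarrow> 't \<Rightarrow> real) \<Rightarrow> ('a \<Rightarrow> 't \<Rightarrow> 'k) \<Rightarrow> ('t \<Rightarrow> real) \<Rightarrow> 'a \<Rightarrow> 'k \<Rightarrow> real" where
  "strat_mean M p S R \<theta> k =
     expect M p \<theta> (\<lambda>\<tau>. if S \<theta> \<tau> = k then R \<tau> else 0) / strat_prob M p S \<theta> k"

definition strat_sd :: "'t measure \<Rightarrow> ('a \<Rightarrow> 't \<Rightarrow> real) \<Rightarrow> ('a \<Rightarrow> 't \<Rightarrow> 'k) \<Rightarrow> ('t \<Rightarrow> real) \<Rightarrow> 'a \<Rightarrow> 'k \<Rightarrow> real" where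
  "strat_sd M p S R \<theta> k =
     sqrt (expect M p \<theta> (\<lambda>\<tau>. if S \<theta> \<tau> = k then (R \<tau> - strat_mean M p S R \<theta> k)\<^sup>2 else 0)
           / strat_prob M p S \<theta> k)"

definition A_SAN :: "'t measure \<Rightarrow> ('a \<Rightarrow> 't \<Rightarrow> real) \<Rightarrow> ('a \<Rightarrow> 't \<Rightarrow> 'k) \<Rightarrow> ('t \<Rightarrow> real) \<Rightarrow> real \<Rightarrow> 'a \<Rightarrow> 't \<Rightarrow> real" where
  "A_SAN M p S R \<epsilon> \<theta> \<tau> =
     (R \<tau> - strat_mean M p S R \<theta> (S \<theta> \<tau>)) / (strat_sd M p S R \<theta> (S \<theta> \<tau>) + \<epsilon>)"

end

theory Submission
  imports Defs
begin

lemma grad_eq: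
  fixes f :: "'a::euclidean_space \<Rightarrow> real"
  assumes "(f has_derivative (\<lambda>h. g \<bullet> h)) (at x)"
  shows "grad f x = g"
  unfolding grad_def
proof (rule the_equality)
  show "(f has_derivative (\<lambda>h. g \<bullet> h)) (at x)" by fact
  fix g' assume "(f has_derivative (\<lambda>h. g' \<bullet> h)) (at x)"
  from has_derivative_unique[OF this assms]
  have "(g' - g) \<bullet> (g' - g) = 0"
    by (metis inner_diff_left diff_self)
  then show "g' = g" by simp
qed

theorem mainTheorem5:
  fixes M :: "'t measure"
    and p :: "'a::euclidean_space \<Rightarrow> 't \<Rightarrow> real"
    and Dp :: "'a \<Rightarrow> 't \<Rightarrow> 'a"
    and R :: "'t \<Rightarrow> real"
    and S :: "'a \<Rightarrow> 't \<Rightarrow> 'k"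
    and K :: "'k set"
    and \<epsilon> :: real
    and \<theta>0 :: 'a
  assumes dens_nonneg: "\<And>\<theta> \<tau>. p \<theta> \<tau> \<ge> 0"
    and dens_meas: "\<And>\<theta>. p \<theta> \<in> borel_measurable M"
    and dens_int: "\<And>\<theta>. integrable M (p \<theta>)"
    and dens_one: "\<And>\<theta>. (\<integral>\<tau>. p \<theta> \<tau> \<partial>M) = 1"
    and dens_diff: "\<And>\<theta> \<tau>. ((\<lambda>\<theta>'. p \<theta>' \<tau>) has_derivative (\<lambda>h. Dp \<theta> \<tau> \<bullet> h)) (at \<theta>)"
    and R_meas: "R \<in> borel_measurable M"
    and R_int: "\<And>\<theta>. integrable M (\<lambda>\<tau>. p \<theta> \<tau> * R \<tau>)"
    and R2_int: "\<And>\<theta>. integrable M (\<lambda>\<tau>. p \<theta> \<tau> * (R \<tau>)\<^sup>2)"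
    and K_fin: "finite K"
    and S_range: "\<And>\<theta> \<tau>. S \<theta> \<tau> \<in> K"
    and S_meas: "\<And>\<theta> k. {\<tau> \<in> space M. S \<theta> \<tau> = k} \<in> sets M"
    and sd_pos: "\<And>k. k \<in> K \<Longrightarrow> strat_sd M p S R \<theta>0 k > 0"
    and eps_pos: "\<epsilon> > 0"
    and Dp_int: "integrable M (\<lambda>\<tau>. Dp \<theta>0 \<tau>)"
    and RDp_int: "integrable M (\<lambda>\<tau>. R \<tau> *\<^sub>R Dp \<theta>0 \<tau>)"
    and diff_under_int_prob: "\<And>k. k \<in> K \<Longrightarrow>
        ((\<lambda>\<theta>. \<integral>\<tau>. (if S \<theta> \<tau> = k then p \<theta> \<tau> else 0) \<partial>M) has_derivative
         (\<lambda>h. (\<integral>\<tau>. (if S \<theta>0 \<tau> = k then Dp \<theta>0 \<tau> else 0) \<partial>M) \<bullet> h)) (at \<theta>0)"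
    and diff_under_int_R: "\<And>k. k \<in> K \<Longrightarrow>
        ((\<lambda>\<theta>. \<integral>\<tau>. (if S \<theta> \<tau> = k then p \<theta> \<tau> * R \<tau> else 0) \<partial>M) has_derivative
         (\<lambda>h. (\<integral>\<tau>. (if S \<theta>0 \<tau> = k then R \<tau> *\<^sub>R Dp \<theta>0 \<tau> else 0) \<partial>M) \<bullet> h)) (at \<theta>0)"
  shows "(\<forall>k\<in>K. (\<lambda>\<theta>. strat_mean M p S R \<theta> k) differentiable (at \<theta>0))
    \<and> expect M p \<theta>0 (\<lambda>\<tau>. A_SAN M p S R \<epsilon> \<theta>0 \<tau> *\<^sub>R grad (\<lambda>\<theta>. ln (p \<theta> \<tau>)) \<theta>0)
      = (\<Sum>k\<in>K. (strat_prob M p S \<theta>0 k / (strat_sd M p S R \<theta>0 k + \<epsilon>))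
                   *\<^sub>R grad (\<lambda>\<theta>. strat_mean M p S R \<theta> k) \<theta>0)"
proof -
  define P where "P k \<theta> = (\<integral>\<tau>. (if S \<theta> \<tau> = k then p \<theta> \<tau> else 0) \<partial>M)" for k \<theta>
  define N where "N k \<theta> = (\<integral>\<tau>. (if S \<theta> \<tau> = k then p \<theta> \<tau> * R \<tau> else 0) \<partial>M)" for k \<theta>
  define P' where "P' k = (\<integral>\<tau>. (if S \<theta>0 \<tau> = k then Dp \<theta>0 \<tau> else 0) \<partial>M)" for k
  define N' where "N' k = (\<integral>\<tau>. (if S \<theta>0 \<tau> = k then R \<tau> *\<^sub>R Dp \<theta>0 \<tau> else 0) \<partial>M)" for k
  define mu where "mu k = strat_mean M p S R \<theta>0 k" for k
  define sd where "sd k = strat_sd M p S R \<theta>0 k" for k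
  have sp: "strat_prob M p S \<theta> k = P k \<theta>" for \<theta> k
    unfolding strat_prob_def expect_def P_def
    by (rule Bochner_Integration.integral_cong) auto
  have sm: "strat_mean M p S R \<theta> k = N k \<theta> / P k \<theta>" for \<theta> k
    unfolding strat_mean_def sp unfolding expect_def N_def
    by (intro arg_cong2[where f="(/)"] refl Bochner_Integration.integral_cong) auto
  have Pnz: "P k \<theta>0 \<noteq> 0" if "k \<in> K" for k
  proof
    assume "P k \<theta>0 = 0"
    then have "strat_sd M p S R \<theta>0 k = 0" unfolding strat_sd_def sp by simp
    with sd_pos[OF that] show False by simp
  qed
  have hd: "((\<lambda>\<theta>. strat_mean M p S R \<theta> k) has_derivative
      (\<lambda>h. ((1 / P k \<theta>0) *\<^sub>R (N' k - mu k *\<^sub>R P' k)) \<bullet> h)) (at \<theta>0)" if k: "k \<in> K" for k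
  proof -
    have "((\<lambda>\<theta>. N k \<theta> / P k \<theta>) has_derivative
      (\<lambda>h. (N' k \<bullet> h * P k \<theta>0 - N k \<theta>0 * (P' k \<bullet> h)) / (P k \<theta>0 * P k \<theta>0))) (at \<theta>0)"
    proof -
      have dN: "(N k has_derivative (\<lambda>h. N' k \<bullet> h)) (at \<theta>0)"
        unfolding N_def N'_def using diff_under_int_R[OF k] by simp
      have dP: "(P k has_derivative (\<lambda>h. P' k \<bullet> h)) (at \<theta>0)"
        unfolding P_def P'_def using diff_under_int_prob[OF k] by simp
      show ?thesis using has_derivative_divide'[OF dN dP Pnz[OF k]] .
    qed
    moreover have "(\<lambda>h. (N' k \<bullet> h * P k \<theta>0 - N k \<theta>0 * (P' k \<bullet> h)) / (P k \<theta>0 * P k \<theta>0))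
       = (\<lambda>h. ((1 / P k \<theta>0) *\<^sub>R (N' k - mu k *\<^sub>R P' k)) \<bullet> h)"
      using Pnz[OF k] unfolding mu_def sm
      by (auto simp: fun_eq_iff inner_diff_left field_simps)
    ultimately show ?thesis unfolding sm by simp
  qed
  have part1: "\<forall>k\<in>K. (\<lambda>\<theta>. strat_mean M p S R \<theta> k) differentiable (at \<theta>0)"
    using hd unfolding differentiable_def by blast
  have gradmu: "grad (\<lambda>\<theta>. strat_mean M p S R \<theta> k) \<theta>0 = (1 / P k \<theta>0) *\<^sub>R (N' k - mu k *\<^sub>R P' k)"
    if "k \<in> K" for k
    using grad_eq[OF hd[OF that]] .
  have Dp0: "Dp \<theta>0 \<tau> = 0" if "p \<theta>0 \<tau> = 0" for \<tau>
  proof -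
    have "(\<lambda>h. Dp \<theta>0 \<tau> \<bullet> h) = (\<lambda>h. 0)"
      by (rule has_derivative_local_min[OF dens_diff]) (use that dens_nonneg in auto)
    then have "Dp \<theta>0 \<tau> \<bullet> Dp \<theta>0 \<tau> = 0" by metis
    then show ?thesis by simp
  qed
  have pt: "p \<theta>0 \<tau> *\<^sub>R (A_SAN M p S R \<epsilon> \<theta>0 \<tau> *\<^sub>R grad (\<lambda>\<theta>. ln (p \<theta> \<tau>)) \<theta>0)
      = A_SAN M p S R \<epsilon> \<theta>0 \<tau> *\<^sub>R Dp \<theta>0 \<tau>" for \<tau>
  proof (cases "p \<theta>0 \<tau> = 0")
    case True then show ?thesis using Dp0 by simp
  next
    case False
    then have pos: "p \<theta>0 \<tau> > 0" using dens_nonneg[of \<theta>0 \<tau>] by simp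
    have "((\<lambda>\<theta>. ln (p \<theta> \<tau>)) has_derivative (\<lambda>h. ((1 / p \<theta>0 \<tau>) *\<^sub>R Dp \<theta>0 \<tau>) \<bullet> h)) (at \<theta>0)"
      using has_derivative_ln[OF pos dens_diff] by (simp add: field_simps)
    then have "grad (\<lambda>\<theta>. ln (p \<theta> \<tau>)) \<theta>0 = (1 / p \<theta>0 \<tau>) *\<^sub>R Dp \<theta>0 \<tau>" by (rule grad_eq)
    then show ?thesis using False by simp
  qed
  have IR: "integrable M (\<lambda>\<tau>. if S \<theta>0 \<tau> = k then R \<tau> *\<^sub>R Dp \<theta>0 \<tau> else 0)" for k
  proof -
    have "integrable M (\<lambda>\<tau>. indicator {\<tau> \<in> space M. S \<theta>0 \<tau> = k} \<tau> *\<^sub>R (R \<tau> *\<^sub>R Dp \<theta>0 \<tau>))"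
      by (rule integrable_mult_indicator[OF S_meas RDp_int])
    then show ?thesis
      by (rule Bochner_Integration.integrable_cong[THEN iffD1, rotated 2]) (auto simp: indicator_def)
  qed
  have ID: "integrable M (\<lambda>\<tau>. if S \<theta>0 \<tau> = k then Dp \<theta>0 \<tau> else 0)" for k
  proof -
    have "integrable M (\<lambda>\<tau>. indicator {\<tau> \<in> space M. S \<theta>0 \<tau> = k} \<tau> *\<^sub>R Dp \<theta>0 \<tau>)"
      by (rule integrable_mult_indicator[OF S_meas Dp_int])
    then show ?thesis
      by (rule Bochner_Integration.integrable_cong[THEN iffD1, rotated 2]) (auto simp: indicator_def)
  qed
  define f where "f k \<tau> = (1 / (sd k + \<epsilon>)) *\<^sub>R ((if S \<theta>0 \<tau> = k then R \<tau> *\<^sub>R Dp \<theta>0 \<tau> else 0)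
      - mu k *\<^sub>R (if S \<theta>0 \<tau> = k then Dp \<theta>0 \<tau> else 0))" for k \<tau>
  have If: "integrable M (f k)" for k
    unfolding f_def using IR ID by (intro integrable_scaleR_right integrable_diff) auto
  have intf: "integral\<^sup>L M (f k) = (1 / (sd k + \<epsilon>)) *\<^sub>R (N' k - mu k *\<^sub>R P' k)" for k
    unfolding f_def N'_def P'_def
    by (simp add: Bochner_Integration.integral_diff[OF IR integrable_scaleR_right[OF ID]])
  have fsum: "A_SAN M p S R \<epsilon> \<theta>0 \<tau> *\<^sub>R Dp \<theta>0 \<tau> = (\<Sum>k\<in>K. f k \<tau>)" for \<tau>
  proof -
    have "f k \<tau> = (if S \<theta>0 \<tau> = k then (1 / (sd k + \<epsilon>)) *\<^sub>R (R \<tau> *\<^sub>R Dp \<theta>0 \<tau> - mu k *\<^sub>R Dp \<theta>0 \<tau>) else 0)" for k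
      unfolding f_def by simp
    then have "(\<Sum>k\<in>K. f k \<tau>) = (1 / (sd (S \<theta>0 \<tau>) + \<epsilon>)) *\<^sub>R (R \<tau> *\<^sub>R Dp \<theta>0 \<tau> - mu (S \<theta>0 \<tau>) *\<^sub>R Dp \<theta>0 \<tau>)"
      using K_fin S_range by (simp add: sum.delta')
    also have "\<dots> = A_SAN M p S R \<epsilon> \<theta>0 \<tau> *\<^sub>R Dp \<theta>0 \<tau>"
      unfolding A_SAN_def mu_def sd_def by (simp add: scaleR_diff_left[symmetric] divide_inverse mult.commute)
    finally show ?thesis by simp
  qed
  have "expect M p \<theta>0 (\<lambda>\<tau>. A_SAN M p S R \<epsilon> \<theta>0 \<tau> *\<^sub>R grad (\<lambda>\<theta>. ln (p \<theta> \<tau>)) \<theta>0)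
      = (\<integral>\<tau>. (\<Sum>k\<in>K. f k \<tau>) \<partial>M)"
    unfolding expect_def pt fsum ..
  also have "\<dots> = (\<Sum>k\<in>K. (1 / (sd k + \<epsilon>)) *\<^sub>R (N' k - mu k *\<^sub>R P' k))"
    by (simp add: Bochner_Integration.integral_sum[OF If] intf)
  also have "\<dots> = (\<Sum>k\<in>K. (strat_prob M p S \<theta>0 k / (strat_sd M p S R \<theta>0 k + \<epsilon>))
                   *\<^sub>R grad (\<lambda>\<theta>. strat_mean M p S R \<theta> k) \<theta>0)"
  proof (rule sum.cong[OF refl])
    fix k assume k: "k \<in> K"
    show "(1 / (sd k + \<epsilon>)) *\<^sub>R (N' k - mu k *\<^sub>R P' k) = (strat_prob M p S \<theta>0 k / (strat_sd M p S R \<theta>0 k + \<epsilon>))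
                   *\<^sub>R grad (\<lambda>\<theta>. strat_mean M p S R \<theta> k) \<theta>0"
      unfolding gradmu[OF k] sp sd_def using Pnz[OF k] by simp
  qed
  finally show ?thesis using part1 by simp
qed

end
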